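(* Let $p$ be a prime, $n \in \mathbb{N}$, and let $v \in \mathbb{Z}_p^n$ with $|v| \ge 2^{18} \log p$. There exists $Y \subset [n]$ with $n/4 \le |Y| \le n/2$ such that $$|v_Y| \ge \frac{|v|}{4} \qquad \text{and} \qquad T_\ell(v_Y) \subset T_{8\ell}(v),$$ where $\ell := 2^{-16} |v|$.
   Context: $\log$ is the natural logarithm. For $w \in \mathbb{Z}_p^m$, $|w|$ is the number of nonzero coordinates of $w$, and for $t \ge 0$ $$T_t(w) := \Big\{ k \in \mathbb{Z}_p : \sum_{i=1}^m \Big\| \frac{k \cdot w_i}{p} \Big\|^2 \le t \Big\},$$ where $k \cdot w_i \in \mathbb{Z}$ is the product of the representatives of $k$ and $w_i$ in $\{0,\ldots,p-1\}$, and $\|x\|$ is the distance from $x$ to the nearest integer. For $Y \subset [n]$, $v_Y \in \mathbb{Z}_p^{|Y|}$ is the restriction of $v$ to the coordinates in $Y$ (so $T_\ell(v_Y)$ sums only over $i \in Y$). *)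

theory Defs
  imports "HOL-Analysis.Analysis"
begin

text \<open>Elements of Z_p are represented by their representatives in {0..<p};
  a vector v in Z_p^n is a function nat => nat with v i < p for i < n,
  coordinates indexed by {0..<n}.\<close>

definition dist_int :: "real \<Rightarrow> real" where
  "dist_int x = \<bar>x - of_int (round x)\<bar>"

definition supp_size :: "(nat \<Rightarrow> nat) \<Rightarrow> nat set \<Rightarrow> nat" where
  "supp_size v I = card {i \<in> I. v i \<noteq> 0}"

definition Tset :: "nat \<Rightarrow> real \<Rightarrow> (nat \<Rightarrow> nat) \<Rightarrow> nat set \<Rightarrow> nat set" where
  "Tset p t v I = {k \<in> {0..<p}. (\<Sum>i\<in>I. (dist_int (real (k * v i) / real p))\<^sup>2) \<le> t}"

end

theory Submission
  imports Defs
begin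

lemma exp_neg_le: fixes x :: real assumes "0 \<le> x" "x \<le> 1" shows "exp (-x) \<le> 1 - x/2"
proof -
  have "1 + x \<le> exp x" by (rule exp_ge_add_one_self)
  have "(1 - x/2) * (1 + x) \<ge> 1" using assms by (simp add: algebra_simps) (smt (verit) mult_left_le_one_le assms)
  hence "(1 - x/2) * exp x \<ge> 1" using \<open>1 + x \<le> exp x\<close> assms
    using mult_left_mono[of "1+x" "exp x" "1 - x/2"] by linarith
  thus ?thesis by (simp add: exp_minus field_simps)
qed

lemma pair_exp: fixes a b :: real assumes "0 \<le> a" "a \<le> 1" "0 \<le> b" "b \<le> 1"
  shows "exp (-a) + exp (-b) \<le> 2 * exp (-(a+b)/4)"
proof -
  have "exp (-a) + exp (-b) \<le> 2 * (1 + (-(a+b)/4))" using exp_neg_le[of a] exp_neg_le[of b] assms by (simp add: field_simps)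
  also have "1 + (-(a+b)/4) \<le> exp (-(a+b)/4)" by (rule exp_ge_add_one_self)
  finally show ?thesis by simp
qed

lemma pair_sum: "(\<Sum>j<(m::nat). f (2*j) + f (2*j+1)) = (\<Sum>i<2*m. (f i :: real))"
  by (induction m arbitrary: f) (auto simp: mult_2)

lemma count_bound:
  fixes a b :: "nat \<Rightarrow> real"
  assumes "\<forall>j<m. 0 \<le> a j \<and> a j \<le> 1 \<and> 0 \<le> b j \<and> b j \<le> 1"
  shows "real (card {D \<in> Pow {..<m}. (\<Sum>j<m. if j \<in> D then b j else a j) \<le> t})
     \<le> exp t * 2^m * exp (-(\<Sum>j<m. a j + b j)/4)"
proof -
  define S where "S D = (\<Sum>j<m. if j \<in> D then b j else a j)" for D
  define B where "B = {D \<in> Pow {..<m}. S D \<le> t}"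
  have finB: "finite B" unfolding B_def by auto
  have "real (card B) * exp (-t) = (\<Sum>D\<in>B. exp (-t))" by simp
  also have "\<dots> \<le> (\<Sum>D\<in>B. exp (- S D))" by (rule sum_mono) (auto simp: B_def)
  also have "\<dots> \<le> (\<Sum>D\<in>Pow {..<m}. exp (- S D))" by (rule sum_mono2) (auto simp: B_def)
  also have "\<dots> = (\<Sum>D\<in>Pow {..<m}. (\<Prod>j\<in>D. exp (- b j)) * (\<Prod>j\<in>{..<m}-D. exp (- a j)))"
  proof (rule sum.cong[OF refl])
    fix D assume D: "D \<in> Pow {..<m}"
    have "S D = sum b ({..<m} \<inter> {j. j \<in> D}) + sum a ({..<m} \<inter> - {j. j \<in> D})"
      unfolding S_def by (rule sum.If_cases) simp
    also have "{..<m} \<inter> {j. j \<in> D} = D" using D by auto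
    also have "{..<m} \<inter> - {j. j \<in> D} = {..<m} - D" by auto
    finally have "- S D = sum (\<lambda>j. - b j) D + sum (\<lambda>j. - a j) ({..<m} - D)"
      by (simp add: sum_negf)
    moreover have "finite D" using D finite_subset by auto
    ultimately show "exp (- S D) = (\<Prod>j\<in>D. exp (- b j)) * (\<Prod>j\<in>{..<m}-D. exp (- a j))"
      by (simp add: exp_add exp_sum)
  qed
  also have "\<dots> = (\<Prod>j<m. exp (- b j) + exp (- a j))" by (rule prod_add[symmetric]) simp
  also have "\<dots> \<le> (\<Prod>j<m. 2 * exp (-(a j + b j)/4))"
    by (rule prod_mono) (use assms pair_exp in \<open>auto simp: add.commute\<close>)
  also have "\<dots> = 2^m * exp (-(\<Sum>j<m. a j + b j)/4)"
    by (simp add: prod.distrib exp_sum[symmetric] sum_negf sum_divide_distrib[symmetric] sum.distrib sum_subtractf)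
  finally have "real (card B) * exp (-t) \<le> 2^m * exp (-(\<Sum>j<m. a j + b j)/4)" .
  hence "real (card B) \<le> exp t * (2^m * exp (-(\<Sum>j<m. a j + b j)/4))"
    by (simp add: exp_minus field_simps)
  thus ?thesis unfolding B_def S_def by (simp add: mult.assoc)
qed


lemma ln2_ge: "ln (2::real) \<ge> 1/2"
proof -
  have "exp (1/2::real) * exp (1/2) = exp 1" by (simp add: exp_add[symmetric])
  hence "exp (1/2::real) * exp (1/2) \<le> 3" using exp_le by simp
  hence "exp (1/2::real) \<le> 2"
  proof -
    assume h: "exp (1/2::real) * exp (1/2) \<le> 3"
    show ?thesis
    proof (rule ccontr)
      assume "\<not> exp (1/2::real) \<le> 2"
      hence "2 * 2 \<le> exp (1/2::real) * exp (1/2)" by (intro mult_mono) auto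
      thus False using h by simp
    qed
  qed
  hence "ln (exp (1/2::real)) \<le> ln 2" by (subst ln_le_cancel_iff) auto
  thus ?thesis by simp
qed

lemma dist_int_bounds: "0 \<le> (dist_int x)\<^sup>2 \<and> (dist_int x)\<^sup>2 \<le> 1"
proof -
  have "\<bar>x - of_int (round x)\<bar> \<le> 1/2" using of_int_round_abs_le[of x] by linarith
  hence "dist_int x \<le> 1/2" "0 \<le> dist_int x" by (auto simp: dist_int_def)
  hence "(dist_int x)\<^sup>2 \<le> (1/2)^2" by (intro power_mono) auto
  thus ?thesis using \<open>0 \<le> dist_int x\<close> by (simp add: power2_eq_square)
qed

theorem lemma3p5:
  fixes p n :: nat and v :: "nat \<Rightarrow> nat"
  assumes "prime p"
    and "\<forall>i<n. v i < p"
    and "real (supp_size v {0..<n}) \<ge> 2^18 * ln (real p)"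
  shows "\<exists>Y. Y \<subseteq> {0..<n} \<and> real n / 4 \<le> real (card Y) \<and> real (card Y) \<le> real n / 2
           \<and> real (supp_size v Y) \<ge> real (supp_size v {0..<n}) / 4
           \<and> Tset p (real (supp_size v {0..<n}) / 2^16) v Y
               \<subseteq> Tset p (8 * (real (supp_size v {0..<n}) / 2^16)) v {0..<n}"
proof -
  define s where "s = supp_size v {0..<n}"
  define l where "l = real s / 2^16"
  have p2: "p \<ge> 2" using assms(1) prime_ge_2_nat by blast
  have lnp: "ln (real p) \<ge> 1/2" proof -
    have "ln 2 \<le> ln (real p)" using p2 by simp
    thus ?thesis using ln2_ge by linarith
  qed
  have l4: "l \<ge> 4 * ln (real p)" using assms(3) unfolding l_def s_def by simp
  define A where "A = {i\<in>{0..<n}. v i \<noteq> 0}"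
  define Z where "Z = {i\<in>{0..<n}. v i = 0}"
  have cardA: "card A = s" unfolding A_def s_def supp_size_def by simp
  have s2: "s \<ge> 2" using assms(3) lnp unfolding s_def by simp
  have sn: "s \<le> n"
  proof -
    have "A \<subseteq> {0..<n}" unfolding A_def by auto
    hence "card A \<le> card {0..<n}" by (intro card_mono) auto
    thus ?thesis using cardA by simp
  qed
  define L where "L = sorted_list_of_set A @ sorted_list_of_set Z"
  have distL: "distinct L" unfolding L_def A_def Z_def by auto
  have setL: "set L = {0..<n}" unfolding L_def A_def Z_def by auto
  have lenL: "length L = n" using distinct_card[OF distL] setL by simp
  have LA: "L ! i \<in> A" if "i < s" for i
  proof -
    have "length (sorted_list_of_set A) = s" using cardA by simp
    hence "L ! i = sorted_list_of_set A ! i" unfolding L_def using that by (simp add: nth_append)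
    moreover have "sorted_list_of_set A ! i \<in> set (sorted_list_of_set A)"
      using that \<open>length (sorted_list_of_set A) = s\<close> by (metis nth_mem)
    moreover have "finite A" unfolding A_def by simp
    ultimately show ?thesis by simp
  qed
  define m where "m = n div 2"
  define idx where "idx D j = L ! (2*j + (if j \<in> D then 1 else 0))" for D :: "nat set" and j
  have posn: "2*j + (if j \<in> D then 1 else 0) < n" if "j < m" for j D
    using that unfolding m_def by auto
  have inj: "inj_on (idx D) {..<m}" for D
  proof
    fix j1 j2 assume j: "j1 \<in> {..<m}" "j2 \<in> {..<m}" "idx D j1 = idx D j2"
    hence "2*j1 + (if j1 \<in> D then 1 else 0) = 2*j2 + (if j2 \<in> D then 1 else 0)"
      unfolding idx_def using posn[of j1 D] posn[of j2 D] distL lenL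
      by (simp add: nth_eq_iff_index_eq)
    thus "j1 = j2" by (auto split: if_splits)
  qed
  define Y where "Y D = idx D ` {..<m}" for D
  have cardY: "card (Y D) = m" for D unfolding Y_def using card_image[OF inj] by simp
  have Ysub: "Y D \<subseteq> {0..<n}" for D
  proof
    fix x assume "x \<in> Y D"
    then obtain j where j: "j < m" "x = idx D j" unfolding Y_def by auto
    have "L ! (2*j + (if j \<in> D then 1 else 0)) \<in> set L"
      using posn[OF j(1), of D] lenL by (intro nth_mem) simp
    thus "x \<in> {0..<n}" using j setL unfolding idx_def by simp
  qed
  have suppY: "supp_size v (Y D) \<ge> s div 2" for D
  proof -
    have "idx D ` {..<s div 2} \<subseteq> {i \<in> Y D. v i \<noteq> 0}"
    proof
      fix i assume "i \<in> idx D ` {..<s div 2}"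
      then obtain j where j: "j < s div 2" "i = idx D j" by auto
      have "j < m" using j sn unfolding m_def by linarith
      have "2*j + (if j \<in> D then 1 else 0) < s" using j by auto
      hence "i \<in> A" using LA j unfolding idx_def by simp
      thus "i \<in> {i \<in> Y D. v i \<noteq> 0}" unfolding A_def Y_def using j \<open>j < m\<close> by auto
    qed
    moreover have "inj_on (idx D) {..<s div 2}"
      by (rule inj_on_subset[OF inj[of D]]) (use sn in \<open>auto simp: m_def\<close>)
    moreover have "finite (Y D)" unfolding Y_def by simp
    ultimately have "card (idx D ` {..<s div 2}) \<le> card {i \<in> Y D. v i \<noteq> 0}"
      by (intro card_mono) auto
    thus ?thesis unfolding supp_size_def using card_image[OF \<open>inj_on (idx D) {..<s div 2}\<close>] by simp
  qed
  define w where "w k i = (dist_int (real (k * v i) / real p))\<^sup>2" for k i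
  have w01: "0 \<le> w k i \<and> w k i \<le> 1" for k i unfolding w_def by (rule dist_int_bounds)
  define Sf where "Sf k = (\<Sum>i\<in>{0..<n}. w k i)" for k
  define a where "a k j = w k (L ! (2*j))" for k j
  define b where "b k j = w k (L ! (2*j+1))" for k j
  have SY: "(\<Sum>i\<in>Y D. w k i) = (\<Sum>j<m. if j \<in> D then b k j else a k j)" for D k
  proof -
    have "(\<Sum>i\<in>Y D. w k i) = (\<Sum>j<m. w k (idx D j))"
      unfolding Y_def using sum.reindex[OF inj[of D], of "w k"] by simp
    also have "\<dots> = (\<Sum>j<m. if j \<in> D then b k j else a k j)"
      by (rule sum.cong) (auto simp: idx_def a_def b_def)
    finally show ?thesis .
  qed
  have Sab: "(\<Sum>j<m. a k j + b k j) \<ge> Sf k - 1" for k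
  proof -
    have "(\<Sum>j<m. a k j + b k j) = (\<Sum>i<2*m. w k (L ! i))"
      unfolding a_def b_def by (rule pair_sum)
    moreover have "(\<Sum>i<n. w k (L ! i)) = Sf k"
      unfolding Sf_def
      using sum.reindex_bij_betw[OF bij_betw_nth[OF distL refl refl], of "w k"] setL lenL
      by (simp add: lessThan_atLeast0)
    moreover have "(\<Sum>i<n. w k (L ! i)) \<le> (\<Sum>i<2*m. w k (L ! i)) + 1"
    proof (cases "even n")
      case True thus ?thesis unfolding m_def using w01 by simp
    next
      case False hence "n = Suc (2*m)" unfolding m_def by presburger
      thus ?thesis using w01[of k "L ! (2*m)"] by simp
    qed
    ultimately show ?thesis by linarith
  qed
  define K where "K = {k\<in>{0..<p}. Sf k > 8 * l}"
  define Bk where "Bk k = {D \<in> Pow {..<m}. (\<Sum>j<m. if j \<in> D then b k j else a k j) \<le> l}" for k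
  have pinv: "exp (- l) \<le> 1 / real p ^ 4"
  proof -
    have "exp (- l) \<le> exp (- (4 * ln (real p)))" using l4 by simp
    also have "- (4 * ln (real p)) = - ln (real p ^ 4)" using p2 by (simp add: ln_realpow)
    also have "exp (- ln (real p ^ 4)) = 1 / real p ^ 4" using p2 by (simp add: exp_minus inverse_eq_divide)
    finally show ?thesis .
  qed
  have e14: "exp (1/4::real) \<le> 3" using exp_le exp_le_cancel_iff[of "1/4::real" 1] by linarith
  have cardBk: "real (card (Bk k)) \<le> 2^m * 3 / real p ^ 4" if "k \<in> K" for k
  proof -
    have "real (card (Bk k)) \<le> exp l * 2^m * exp (-(\<Sum>j<m. a k j + b k j)/4)"
      unfolding Bk_def by (rule count_bound) (use w01 a_def b_def in auto)
    also have "\<dots> \<le> exp l * 2^m * exp (-(Sf k - 1)/4)"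
      using Sab[of k] by (intro mult_left_mono) auto
    also have "\<dots> \<le> exp l * 2^m * exp (-(8*l - 1)/4)"
      using that unfolding K_def by (intro mult_left_mono) auto
    also have "\<dots> = 2^m * (exp (1/4) * exp (- l))"
      by (simp add: exp_add[symmetric] field_simps)
    also have "\<dots> \<le> 2^m * (3 * (1 / real p ^ 4))"
      using e14 pinv by (intro mult_left_mono mult_mono) auto
    finally show ?thesis by simp
  qed
  have "real (card (\<Union>k\<in>K. Bk k)) \<le> real (\<Sum>k\<in>K. card (Bk k))"
    by (subst of_nat_le_iff) (rule card_UN_le, simp add: K_def)
  also have "\<dots> = (\<Sum>k\<in>K. real (card (Bk k)))" by simp
  also have "\<dots> \<le> (\<Sum>k\<in>K. 2^m * 3 / real p ^ 4)" by (rule sum_mono) (use cardBk in auto)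
  also have "\<dots> = real (card K) * (2^m * 3 / real p ^ 4)" by simp
  also have "\<dots> \<le> real p * (2^m * 3 / real p ^ 4)"
  proof -
    have "K \<subseteq> {0..<p}" unfolding K_def by auto
    hence "card K \<le> card {0..<p}" by (intro card_mono) auto
    hence "card K \<le> p" by simp
    thus ?thesis by (intro mult_right_mono) auto
  qed
  also have "\<dots> = 2^m * 3 / real p ^ 3" using p2 by (simp add: power_eq_if field_simps)
  also have "\<dots> < 2^m"
  proof -
    have "real p ^ 3 \<ge> 2^3" using p2 by (intro power_mono) auto
    hence "2^m * 3 / real p ^ 3 \<le> 2^m * 3 / 8" using p2 by (intro divide_left_mono) auto
    also have "\<dots> < 2^m" by simp
    finally show ?thesis .
  qed
  finally have "card (\<Union>k\<in>K. Bk k) < card (Pow {..<m::nat})" by (simp add: card_Pow)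
  moreover have "(\<Union>k\<in>K. Bk k) \<subseteq> Pow {..<m}" unfolding Bk_def by auto
  ultimately have "\<not> Pow {..<m} \<subseteq> (\<Union>k\<in>K. Bk k)"
    using card_mono[of "\<Union>k\<in>K. Bk k" "Pow {..<m}"] by (meson finite_subset finite_Pow_iff finite_lessThan not_le)
  then obtain D where D: "D \<in> Pow {..<m}" "D \<notin> (\<Union>k\<in>K. Bk k)" by blast
  show ?thesis
  proof (intro exI conjI)
    show "Y D \<subseteq> {0..<n}" by (rule Ysub)
    have "n \<ge> 2" using s2 sn by simp
    thus "real n / 4 \<le> real (card (Y D))" "real (card (Y D)) \<le> real n / 2"
      unfolding cardY m_def by linarith+
    show "real (supp_size v (Y D)) \<ge> real (supp_size v {0..<n}) / 4"
      using suppY[of D] s2 unfolding s_def[symmetric] by linarith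
    show "Tset p (real (supp_size v {0..<n}) / 2^16) v (Y D)
               \<subseteq> Tset p (8 * (real (supp_size v {0..<n}) / 2^16)) v {0..<n}"
    proof
      fix k assume "k \<in> Tset p (real (supp_size v {0..<n}) / 2^16) v (Y D)"
      hence k: "k < p" "(\<Sum>i\<in>Y D. w k i) \<le> l" unfolding Tset_def w_def l_def s_def by auto
      have "Sf k \<le> 8 * l"
      proof (rule ccontr)
        assume "\<not> Sf k \<le> 8 * l"
        hence "k \<in> K" using k unfolding K_def by auto
        moreover have "D \<in> Bk k" using D(1) k(2) SY unfolding Bk_def by simp
        ultimately show False using D(2) by blast
      qed
      thus "k \<in> Tset p (8 * (real (supp_size v {0..<n}) / 2^16)) v {0..<n}"
        using k unfolding Tset_def Sf_def w_def l_def s_def by auto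
    qed
  qed
qed

end
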